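(* Let $\mathbb{K}$ be an algebraically closed field of characteristic zero, let $D$ be a simple derivation of $\mathbb{K}[x,y]$ and let $\rho\in\mathrm{Aut}(D)$. If $\rho$ stabilizes the ideal $(x)\subset\mathbb{K}[x,y]$ generated by $x$, then $\rho=\mathrm{id}$.
   Context: A derivation of $\mathbb{K}[x,y]$ is a $\mathbb{K}$-linear map $D$ with $D(fg)=gD(f)+fD(g)$. $D$ is simple if there is no ideal $I$ with $(0)\neq I\neq \mathbb{K}[x,y]$ and $D(I)\subseteq I$. $\mathrm{Aut}(D)$ denotes the group of $\mathbb{K}$-algebra automorphisms $\rho$ of $\mathbb{K}[x,y]$ with $\rho D=D\rho$. *)

theory Defs
  imports "HOL-Computational_Algebra.Polynomial"
begin

text \<open>K[x,y] is modelled as (K[x])[y], i.e. the type 'a poly poly: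
  the outer polynomial variable is y, the inner one is x.\<close>

type_synonym 'a bipoly = "'a poly poly"

definition alg_closed :: "'a::field itself \<Rightarrow> bool" where
  "alg_closed _ \<longleftrightarrow> (\<forall>p::'a poly. degree p > 0 \<longrightarrow> (\<exists>z. poly p z = 0))"

definition kconst :: "'a::comm_ring_1 \<Rightarrow> 'a bipoly" where
  "kconst c = [:[:c:]:]"

definition varx :: "'a::comm_ring_1 bipoly" where
  "varx = [:[:0, 1:]:]"

definition vary :: "'a::comm_ring_1 bipoly" where
  "vary = [:0, 1:]"

definition is_ideal :: "'a::comm_ring_1 bipoly set \<Rightarrow> bool" where
  "is_ideal I \<longleftrightarrow> 0 \<in> I \<and> (\<forall>a\<in>I. \<forall>b\<in>I. a + b \<in> I) \<and> (\<forall>a\<in>I. \<forall>r. r * a \<in> I)"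

definition principal_ideal :: "'a::comm_ring_1 bipoly \<Rightarrow> 'a bipoly set" where
  "principal_ideal g = {g * f | f. True}"

definition is_derivation :: "('a::comm_ring_1 bipoly \<Rightarrow> 'a bipoly) \<Rightarrow> bool" where
  "is_derivation D \<longleftrightarrow>
     (\<forall>f g. D (f + g) = D f + D g) \<and>
     (\<forall>c f. D (kconst c * f) = kconst c * D f) \<and>
     (\<forall>f g. D (f * g) = g * D f + f * D g)"

definition simple_derivation :: "('a::comm_ring_1 bipoly \<Rightarrow> 'a bipoly) \<Rightarrow> bool" where
  "simple_derivation D \<longleftrightarrow> is_derivation D \<and>
     (\<forall>I. is_ideal I \<and> I \<noteq> {0} \<and> I \<noteq> UNIV \<longrightarrow> \<not> (D ` I \<subseteq> I))"

definition is_K_automorphism :: "('a::comm_ring_1 bipoly \<Rightarrow> 'a bipoly) \<Rightarrow> bool" where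
  "is_K_automorphism \<rho> \<longleftrightarrow> bij \<rho> \<and>
     (\<forall>f g. \<rho> (f + g) = \<rho> f + \<rho> g) \<and>
     (\<forall>f g. \<rho> (f * g) = \<rho> f * \<rho> g) \<and>
     \<rho> 1 = 1 \<and>
     (\<forall>c f. \<rho> (kconst c * f) = kconst c * \<rho> f)"

definition Aut_der :: "('a::comm_ring_1 bipoly \<Rightarrow> 'a bipoly) \<Rightarrow> ('a bipoly \<Rightarrow> 'a bipoly) set" where
  "Aut_der D = {\<rho>. is_K_automorphism \<rho> \<and> \<rho> \<circ> D = D \<circ> \<rho>}"

end

theory Submission
  imports Defs
begin


lemma bipoly_induct:
  fixes P :: "'a::comm_ring_1 bipoly \<Rightarrow> bool"
  assumes k: "\<And>c. P (kconst c)" and x: "P varx" and y: "P vary"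
    and add: "\<And>f g. P f \<Longrightarrow> P g \<Longrightarrow> P (f+g)"
    and mul: "\<And>f g. P f \<Longrightarrow> P g \<Longrightarrow> P (f*g)"
  shows "P f"
proof -
  have c: "P [:a:]" for a
  proof (induct a)
    case 0 then show ?case using k[of 0] by (simp add: kconst_def)
  next
    case (pCons c a)
    have "[:pCons c a:] = kconst c + varx * [:a:]"
      by (simp add: kconst_def varx_def)
    then show ?case using add k mul x pCons by metis
  qed
  show ?thesis
  proof (induct f)
    case 0 then show ?case using c[of 0] by simp
  next
    case (pCons a f)
    have "pCons a f = [:a:] + vary * f" by (simp add: vary_def)
    then show ?case using add mul c y pCons by metis
  qed
qed

lemma der_basic:
  assumes "is_derivation D"
  shows "D (f - g) = D f - D g" "D 0 = 0" "D (kconst c) = 0" "D 1 = 0"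
proof -
  have a: "D (f+g) = D f + D g" for f g using assms by (simp add: is_derivation_def)
  have "D (f - g + g) = D (f-g) + D g" by (rule a)
  then show "D (f - g) = D f - D g" by (simp add: algebra_simps)
  have "D (0+0) = D 0 + D 0" by (rule a)
  then show "D 0 = 0" by simp
  have "D (1*1) = 1 * D 1 + 1 * D 1" using assms unfolding is_derivation_def by blast
  then have "D 1 = D 1 + D 1" by simp
  then show d1: "D 1 = 0" by simp
  have "D (kconst c * 1) = kconst c * D 1" using assms unfolding is_derivation_def by blast
  then show "D (kconst c) = 0" using d1 by simp
qed

lemma der_chain:
  assumes "is_derivation D"
  shows "D [:a:] = [:pderiv a:] * D varx"
proof (induct a)
  case 0 then show ?case using der_basic(2)[OF assms] by simp
next
  case (pCons c a)
  have e: "[:pCons c a:] = kconst c + varx * [:a:]"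
    by (simp add: kconst_def varx_def)
  have m: "D (f*g) = g * D f + f * D g" "D (f+g) = D f + D g" for f g using assms by (auto simp: is_derivation_def)
  have "D [:pCons c a:] = [:a:] * D varx + varx * ([:pderiv a:] * D varx)"
    unfolding e m der_basic(3)[OF assms] pCons by simp
  also have "\<dots> = ([:a:] + varx * [:pderiv a:]) * D varx"
    by (simp add: distrib_right)
  also have "[:a:] + varx * [:pderiv a:] = [:pderiv (pCons c a):]"
  proof -
    have "varx * [:pderiv a:] = [:pCons 0 (pderiv a):]"
      by (simp add: varx_def)
    then show ?thesis by (simp add: pderiv_pCons)
  qed
  finally show ?case .
qed

lemma stable_principal:
  assumes "simple_derivation D" "g \<noteq> 0" "\<not> is_unit g" "g dvd D g"
  shows False
proof -
  let ?I = "principal_ideal g"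
  have der: "is_derivation D" using assms(1) by (simp add: simple_derivation_def)
  have id: "is_ideal ?I" unfolding is_ideal_def principal_ideal_def
  proof (intro conjI ballI allI)
    show "0 \<in> {g * f |f. True}" by (rule CollectI, rule exI[of _ 0], simp)
  next
    fix a b assume "a \<in> {g * f |f. True}" "b \<in> {g * f |f. True}"
    then obtain f1 f2 where "a = g*f1" "b = g*f2" by blast
    then have "a + b = g*(f1+f2)" by (simp add: distrib_left)
    then show "a + b \<in> {g * f |f. True}" by blast
  next
    fix a r assume "a \<in> {g * f |f. True}"
    then obtain f1 where "a = g*f1" by blast
    then have "r * a = g*(r*f1)" by (simp add: mult.left_commute)
    then show "r * a \<in> {g * f |f. True}" by blast
  qed
  have "g \<in> ?I" unfolding principal_ideal_def by (auto intro: exI[of _ 1])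
  then have n0: "?I \<noteq> {0}" using assms(2) by auto
  have "1 \<notin> ?I" using assms(3) unfolding principal_ideal_def by (auto simp: dvd_def)
  then have nU: "?I \<noteq> UNIV" by auto
  have "D ` ?I \<subseteq> ?I"
  proof
    fix z assume "z \<in> D ` ?I"
    then obtain f where z: "z = D (g*f)" unfolding principal_ideal_def by auto
    obtain h where h: "D g = g * h" using assms(4) by (auto simp: dvd_def)
    have "z = f * D g + g * D f" using der z by (simp add: is_derivation_def)
    also have "\<dots> = g * (f*h + D f)" using h by (simp add: algebra_simps)
    finally show "z \<in> ?I" unfolding principal_ideal_def by auto
  qed
  then show False using assms(1) id n0 nU unfolding simple_derivation_def by blast
qed

definition bar :: "'a::comm_ring_1 bipoly \<Rightarrow> 'a poly" where
  "bar f = map_poly (\<lambda>c. poly c 0) f"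

definition ev :: "'a::comm_ring_1 \<Rightarrow> 'a bipoly \<Rightarrow> 'a" where
  "ev a f = poly (bar f) a"

lemma bar_pCons: "bar (pCons c f) = pCons (poly c 0) (bar f)"
  unfolding bar_def by (rule map_poly_pCons) simp

lemma ev_alt: "ev a f = poly (poly f [:a:]) 0"
  unfolding ev_def by (induct f) (simp_all add: bar_pCons, simp add: bar_def)

lemma ev_hom: "ev a (f+g) = ev a f + ev a g" "ev a (f*g) = ev a f * ev a g"
  "ev a (f - g) = ev a f - ev a g"
  "ev a (kconst c) = c" "ev a varx = 0" "ev a vary = a" "ev a 1 = 1" "ev a 0 = 0"
  by (simp_all add: ev_alt kconst_def varx_def vary_def)

lemma aut_basic:
  assumes "is_K_automorphism \<rho>"
  shows "\<rho> (f - g) = \<rho> f - \<rho> g" "\<rho> 0 = 0" "\<rho> (kconst c) = kconst c"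
    "\<rho> (f + g) = \<rho> f + \<rho> g" "\<rho> (f * g) = \<rho> f * \<rho> g" "\<rho> 1 = 1"
proof -
  have a: "\<rho> (f+g) = \<rho> f + \<rho> g" for f g using assms by (simp add: is_K_automorphism_def)
  have "\<rho> (f - g + g) = \<rho> (f-g) + \<rho> g" by (rule a)
  then show "\<rho> (f - g) = \<rho> f - \<rho> g" by (simp add: algebra_simps)
  have "\<rho> (0+0) = \<rho> 0 + \<rho> 0" by (rule a)
  then show "\<rho> 0 = 0" by simp
  have "\<rho> (kconst c * 1) = kconst c * \<rho> 1" using assms unfolding is_K_automorphism_def by blast
  then show "\<rho> (kconst c) = kconst c" using assms by (simp add: is_K_automorphism_def)
  show "\<rho> (f + g) = \<rho> f + \<rho> g" by (rule a)
  show "\<rho> (f * g) = \<rho> f * \<rho> g" "\<rho> 1 = 1" using assms by (simp_all add: is_K_automorphism_def)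
qed

inductive_set genI :: "('a::comm_ring_1 bipoly \<Rightarrow> 'a bipoly) \<Rightarrow> 'a bipoly set" for \<rho> where
  gen0: "0 \<in> genI \<rho>"
| genS: "h \<in> genI \<rho> \<Longrightarrow> a * (\<rho> b - b) + h \<in> genI \<rho>"

lemma genI_add: "h \<in> genI \<rho> \<Longrightarrow> k \<in> genI \<rho> \<Longrightarrow> h + k \<in> genI \<rho>"
proof (induct h rule: genI.induct)
  case gen0 then show ?case by simp
next
  case (genS h a b)
  then have "a * (\<rho> b - b) + (h + k) \<in> genI \<rho>" by (intro genI.genS) simp
  then show ?case by (simp add: add.assoc)
qed

lemma genI_mult: "h \<in> genI \<rho> \<Longrightarrow> r * h \<in> genI \<rho>"
proof (induct h rule: genI.induct)
  case gen0 then show ?case by (simp add: genI.gen0)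
next
  case (genS h a b)
  then have "(r*a) * (\<rho> b - b) + r * h \<in> genI \<rho>" by (intro genI.genS) simp
  then show ?case by (simp add: algebra_simps)
qed

lemma genI_single: "a * (\<rho> b - b) \<in> genI \<rho>"
  using genI.genS[OF genI.gen0] by (metis add.right_neutral)

lemma caseA:
  fixes D \<rho> :: "'a::field bipoly \<Rightarrow> 'a bipoly"
  assumes simple: "simple_derivation D" and aut: "\<rho> \<in> Aut_der D" and ne: "\<rho> \<noteq> id"
    and fix0: "ev y0 (\<rho> vary) = y0" and rx: "\<rho> varx = kconst l * varx"
  shows False
proof -
  have der: "is_derivation D" using simple by (simp add: simple_derivation_def)
  have A: "is_K_automorphism \<rho>" and comm: "\<And>f. \<rho> (D f) = D (\<rho> f)"
    using aut by (auto simp: Aut_der_def fun_eq_iff)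
  have evr: "ev y0 (\<rho> f) = ev y0 f" for f
  proof (induct f rule: bipoly_induct)
    case (1 c) then show ?case by (simp add: aut_basic[OF A])
  next
    case 2 then show ?case by (simp add: rx ev_hom)
  next
    case 3 then show ?case by (simp add: fix0 ev_hom)
  next
    case (4 f g) then show ?case by (simp add: aut_basic[OF A] ev_hom)
  next
    case (5 f g) then show ?case by (simp add: aut_basic[OF A] ev_hom)
  qed
  let ?I = "genI \<rho>"
  have id: "is_ideal ?I" unfolding is_ideal_def using genI.gen0 genI_add genI_mult by blast
  have sub: "ev y0 h = 0" if "h \<in> ?I" for h
    using that by (induct h rule: genI.induct) (simp_all add: ev_hom evr)
  obtain b where b: "\<rho> b \<noteq> b" using ne by (auto simp: fun_eq_iff)
  have "1 * (\<rho> b - b) \<in> ?I" by (rule genI_single)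
  then have n0: "?I \<noteq> {0}" using b by auto
  have "1 \<notin> ?I" using sub[of 1] by (auto simp: ev_hom)
  then have nU: "?I \<noteq> UNIV" by auto
  have "D h \<in> ?I" if "h \<in> ?I" for h
    using that
  proof (induct h rule: genI.induct)
    case gen0 then show ?case using der_basic(2)[OF der] genI.gen0 by simp
  next
    case (genS h a b)
    have m: "D (f*g) = g * D f + f * D g" "D (f+g) = D f + D g" for f g
      using der by (auto simp: is_derivation_def)
    have "D (a * (\<rho> b - b) + h) = (\<rho> b - b) * D a + a * (\<rho> (D b) - D b) + D h"
      by (simp add: m der_basic(1)[OF der] comm)
    then show ?case
      by (metis genI_add genI_single genS.hyps(2) mult.commute)
  qed
  then have "D ` ?I \<subseteq> ?I" by auto
  then show False using simple id n0 nU unfolding simple_derivation_def by blast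
qed



lemma periodic_const:
  fixes g :: "'b::{idom,ring_char_0} poly"
  assumes v: "v \<noteq> 0" and per: "\<And>z. poly g (z + v) = poly g z"
  shows "g = [:poly g 0:]"
proof (rule ccontr)
  assume ne: "g \<noteq> [:poly g 0:]"
  let ?h = "g - [:poly g 0:]"
  have h0: "?h \<noteq> 0" using ne by simp
  have k: "poly g (of_nat k * v) = poly g 0" for k
    by (induct k) (simp_all add: distrib_right per add.commute[of v])
  have "range (\<lambda>k. of_nat k * v) \<subseteq> {x. poly ?h x = 0}" using k by auto
  moreover have "inj (\<lambda>k::nat. of_nat k * v)"
    by (rule injI) (use v in simp)
  then have "infinite (range (\<lambda>k::nat. of_nat k * v))"
    using finite_imageD by blast
  ultimately have "infinite {x. poly ?h x = 0}" using finite_subset by blast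
  then show False using poly_roots_finite[OF h0] by simp
qed

lemma antideriv:
  fixes b :: "'b::field_char_0 poly"
  shows "\<exists>B. pderiv B = b"
proof -
  let ?B = "\<Sum>i\<le>degree b. monom (coeff b i / of_nat (Suc i)) (Suc i)"
  have "pderiv ?B = (\<Sum>i\<le>degree b. pderiv (monom (coeff b i / of_nat (Suc i)) (Suc i)))"
    using higher_pderiv_sum[of 1] by simp
  also have "\<dots> = (\<Sum>i\<le>degree b. monom (coeff b i) i)"
    by (rule sum.cong) (simp_all add: pderiv_monom del: of_nat_Suc)
  also have "\<dots> = b" by (rule poly_as_sum_of_monoms)
  finally show ?thesis by blast
qed

lemma rho_x:
  fixes \<rho> :: "'a::field bipoly \<Rightarrow> 'a bipoly"
  assumes A: "is_K_automorphism \<rho>" and st: "\<rho> ` principal_ideal varx = principal_ideal varx"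
  shows "\<exists>l. \<rho> varx = kconst l * varx"
proof -
  have "varx \<in> principal_ideal varx" unfolding principal_ideal_def by (auto intro: exI[of _ 1])
  then have "\<rho> varx \<in> principal_ideal varx" "varx \<in> \<rho> ` principal_ideal varx" using st by auto
  then obtain u w where u: "\<rho> varx = varx * u" and w: "varx = \<rho> (varx * w)"
    unfolding principal_ideal_def by auto
  have "varx * 1 = varx * (u * \<rho> w)" using w u aut_basic(5)[OF A] by (simp add: mult.assoc)
  moreover have "varx \<noteq> (0::'a bipoly)" by (simp add: varx_def)
  ultimately have "u * \<rho> w = 1" by (simp only: mult_cancel_left) simp
  then have "is_unit u" by (metis dvd_triv_left)
  then obtain a where a: "u = [:a:]" "is_unit a" using is_unit_poly_iff by blast
  then obtain l where l: "a = [:l:]" using is_unit_poly_iff by blast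
  have "\<rho> varx = kconst l * varx" using u a l by (simp add: kconst_def mult.commute)
  then show ?thesis by blast
qed

lemma bar0_dvd:
  fixes p :: "'a::field bipoly"
  assumes "bar p = 0"
  shows "varx dvd p"
proof -
  let ?q = "map_poly (\<lambda>c. c div [:0,1:]) p"
  have "varx * ?q = p"
  proof (rule poly_eqI)
    fix i
    have "poly (coeff p i) 0 = 0" using arg_cong[OF assms, of "\<lambda>f. coeff f i"]
      by (simp add: bar_def coeff_map_poly)
    then have "[:0,1:] dvd coeff p i" using poly_eq_0_iff_dvd[of "coeff p i" 0] by simp
    then have "[:0,1:] * (coeff p i div [:0,1:]) = coeff p i" by (rule dvd_mult_div_cancel)
    then show "coeff (varx * ?q) i = coeff p i" by (simp only: varx_def coeff_map_poly) (simp add: coeff_map_poly)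
  qed
  then show ?thesis by (metis dvd_triv_left)
qed

lemma varx_not_unit: "\<not> is_unit (varx :: 'a::field bipoly)"
proof
  assume "is_unit (varx :: 'a bipoly)"
  then obtain c where "varx = [:c:]" "is_unit (c::'a poly)" using is_unit_poly_iff by blast
  then have "is_unit ([:0,1:] :: 'a poly)" by (simp add: varx_def)
  then obtain d where "([:0,1:] :: 'a poly) = [:d:]" using is_unit_poly_iff by blast
  then show False by simp
qed



lemma caseB:
  fixes D \<rho> :: "'a::field_char_0 bipoly \<Rightarrow> 'a bipoly"
  assumes ac: "alg_closed TYPE('a)"
    and simple: "simple_derivation D" and aut: "\<rho> \<in> Aut_der D"
    and nofix: "\<And>y0. ev y0 (\<rho> vary) \<noteq> y0" and rx: "\<rho> varx = kconst l * varx"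
  shows False
proof -
  have der: "is_derivation D" using simple by (simp add: simple_derivation_def)
  have A: "is_K_automorphism \<rho>" and comm: "\<And>f. \<rho> (D f) = D (\<rho> f)"
    using aut by (auto simp: Aut_der_def fun_eq_iff)
  have m: "D (f*g) = g * D f + f * D g" "D (f+g) = D f + D g"
    "D (kconst c * f) = kconst c * D f" for f g c
    using der by (auto simp: is_derivation_def)
  have acl: "\<exists>z. poly t z = 0" if "degree t > 0" for t :: "'a poly"
    using ac that unfolding alg_closed_def by blast
  define r where "r = \<rho> vary"
  define t where "t = bar r - [:0,1:]"
  have tn: "poly t z \<noteq> 0" for z using nofix[of z] by (simp add: t_def ev_def r_def)
  then have "degree t = 0" using acl by (meson not_gr0)
  then obtain b where tb: "t = [:b:]" by (meson degree_eq_zeroE)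
  have b0: "b \<noteq> 0" using tn[of 0] tb by simp
  have barr: "bar r = [:b,1:]" using tb unfolding t_def by (metis add_pCons diff_eq_eq pCons_0_0 add.right_neutral add.commute)
  have evr: "ev y0 (\<rho> f) = ev (y0 + b) f" for f y0
  proof (induct f arbitrary: y0 rule: bipoly_induct)
    case (1 c) then show ?case by (simp add: aut_basic[OF A] ev_hom)
  next
    case 2 then show ?case by (simp add: rx ev_hom)
  next
    case 3
    have "ev y0 (\<rho> vary) = y0 + b" using barr by (simp add: ev_def r_def[symmetric])
    then show ?case by (simp add: ev_hom)
  next
    case (4 f g) then show ?case by (simp add: aut_basic[OF A] ev_hom)
  next
    case (5 f g) then show ?case by (simp add: aut_basic[OF A] ev_hom)
  qed
  have barrho: "bar (\<rho> f) = pcompose (bar f) [:b,1:]" for f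
  proof -
    have "poly (bar (\<rho> f)) = poly (pcompose (bar f) [:b,1:])"
      using evr[of _ f] by (auto simp: fun_eq_iff ev_def poly_pcompose add.commute)
    then show ?thesis using poly_eq_poly_eq_iff by blast
  qed
  define p where "p = D varx"
  have barp: "bar p \<noteq> 0"
  proof
    assume "bar p = 0"
    then have "varx dvd D varx" using bar0_dvd p_def by blast
    then show False using stable_principal[OF simple _ varx_not_unit] by (simp add: varx_def)
  qed
  have "\<rho> p = kconst l * p" unfolding p_def comm rx by (rule m(3))
  then have "pcompose (bar p) [:b,1:] = smult l (bar p)"
  proof -
    have "poly (bar (kconst l * p)) = poly (smult l (bar p))"
      by (auto simp: fun_eq_iff ev_def[symmetric] ev_hom)
    then have "bar (kconst l * p) = smult l (bar p)" using poly_eq_poly_eq_iff by blast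
    then show ?thesis using barrho[of p] \<open>\<rho> p = kconst l * p\<close> by simp
  qed
  moreover have "lead_coeff (pcompose (bar p) [:b,1:]) = lead_coeff (bar p) * lead_coeff [:b,1:] ^ degree (bar p)"
    by (rule lead_coeff_comp) simp
  moreover have "lead_coeff (smult l (bar p)) = l * lead_coeff (bar p)" by (rule lead_coeff_smult)
  ultimately have "lead_coeff (bar p) = l * lead_coeff (bar p)" by simp
  then have l1: "l = 1" using barp by (metis mult_cancel_right1 leading_coeff_0_iff)
  have rx1: "\<rho> varx = varx" using rx l1 by (simp add: kconst_def one_pCons[symmetric])
  have rc: "\<rho> [:a:] = [:a:]" for a
  proof (induct a)
    case 0 then show ?case by (simp add: aut_basic[OF A])
  next
    case (pCons c a)
    have "[:pCons c a:] = kconst c + varx * [:a:]" by (simp add: kconst_def varx_def)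
    then show ?case using pCons by (simp only: aut_basic[OF A] rx1)
  qed
  have rcomp: "\<rho> f = pcompose f r" for f
  proof (induct f)
    case 0 then show ?case by (simp add: aut_basic[OF A])
  next
    case (pCons a f)
    have "pCons a f = [:a:] + vary * f" by (simp add: vary_def)
    then have "\<rho> (pCons a f) = [:a:] + r * pcompose f r" using pCons by (simp only: aut_basic[OF A] rc r_def)
    then show ?case by (simp add: pcompose_pCons)
  qed
  obtain h where h: "\<rho> h = vary" using A unfolding is_K_automorphism_def bij_def surj_def by metis
  then have hc: "pcompose h r = vary" using rcomp by simp
  then have "degree h * degree r = 1" using degree_pcompose[of h r] by (simp add: vary_def)
  then have dr: "degree r = 1" and dh: "degree h = 1" by simp_all
  have deg1: "q = [:coeff q 0, coeff q 1:]" if "degree q \<le> 1" for q :: "'a poly poly"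
  proof (rule poly_eqI)
    fix i show "coeff q i = coeff [:coeff q 0, coeff q 1:] i"
      using that by (cases i; cases "i - 1") (auto simp: coeff_eq_0)
  qed
  define v where "v = coeff r 0"
  define u where "u = coeff r 1"
  have rvu: "r = [:v, u:]" using deg1[of r] dr by (simp add: u_def v_def)
  have "pcompose h r = [:coeff h 0:] + r * [:coeff h 1:]"
    using deg1[of h] dh by (metis order.refl pcompose_pCons pcompose_const)
  then have "coeff vary 1 = coeff ([:coeff h 0:] + r * [:coeff h 1:]) 1" using hc by simp
  then have "1 = u * coeff h 1" by (simp add: vary_def rvu mult.commute)
  then have "is_unit u" by (metis dvd_triv_left)
  then obtain u0 where u0: "u = [:u0:]" using is_unit_poly_iff by blast
  have "coeff (bar r) 1 = poly u 0" by (simp add: bar_def coeff_map_poly u_def)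
  then have "u0 = 1" using barr u0 by simp
  then have r1: "r = [:v, 1:]" using rvu u0 by simp
  have "coeff (bar r) 0 = poly v 0" by (simp add: bar_def coeff_map_poly v_def)
  then have "poly v 0 = b" using barr by simp
  then have v0: "v \<noteq> 0" using b0 by auto
  have period: "g = [:poly g 0:]" if "\<rho> g = g" for g
  proof (rule periodic_const[OF v0])
    fix z
    have "poly g (poly r z) = poly g z" using that rcomp[of g] by (metis poly_pcompose)
    then show "poly g (z + v) = poly g z" using r1 by (simp add: add.commute)
  qed
  have "\<rho> p = p" unfolding p_def comm rx1 ..
  then have pc: "p = [:poly p 0:]" by (rule period)
  define c where "c = poly p 0"
  have noroot: "poly c x0 \<noteq> 0" for x0
  proof
    assume "poly c x0 = 0"
    then obtain k where k: "c = [:-x0,1:] * k" using poly_eq_0_iff_dvd by (metis dvdE)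
    define g :: "'a bipoly" where "g = [:[:-x0,1:]:]"
    have "g = varx - kconst x0" by (simp add: g_def varx_def kconst_def)
    then have "D g = p" by (simp add: der_basic[OF der] p_def)
    also have "\<dots> = g * [:k:]" using pc k by (simp add: g_def c_def)
    finally have "g dvd D g" by (metis dvd_triv_left)
    moreover have "g \<noteq> 0" by (simp add: g_def)
    moreover have "\<not> is_unit g"
    proof
      assume "is_unit g"
      then obtain e where "g = [:e:]" "is_unit e" using is_unit_poly_iff by blast
      then have "is_unit [:-x0,1:]" by (simp add: g_def)
      then obtain d where "([:-x0,1:] :: 'a poly) = [:d:]" using is_unit_poly_iff by blast
      then show False by simp
    qed
    ultimately show False using stable_principal[OF simple] by blast
  qed
  then have "degree c = 0" using acl by (meson not_gr0)
  then obtain c0 where c0: "c = [:c0:]" by (meson degree_eq_zeroE)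
  have c00: "c0 \<noteq> 0" using noroot[of 0] c0 by auto
  have pc0: "p = [:[:c0:]:]" using pc c0 c_def by simp
  define q where "q = D vary"
  define w where "w = pderiv v * c"
  have "r = [:v:] + vary" using r1 by (simp add: vary_def)
  then have "\<rho> q = [:pderiv v:] * p + q" unfolding q_def comm r_def[symmetric]
    by (simp add: m der_chain[OF der] p_def)
  then have rq: "pcompose q r = q + [:w:]" using rcomp[of q] pc0 c0 by (simp add: w_def)
  define Q where "Q = smult v q - [:0, w:]"
  have "pcompose Q r = Q"
    unfolding Q_def pcompose_diff pcompose_smult rq
    by (simp add: pcompose_pCons r1 smult_add_right)
  then have "\<rho> Q = Q" using rcomp by simp
  then have QQ: "Q = [:poly Q 0:]" by (rule period)
  have cQ: "coeff Q i = 0" if "i \<ge> 1" for i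
  proof -
    have "coeff Q i = coeff [:poly Q 0:] i" using QQ by simp
    then show ?thesis using that by (cases i) auto
  qed
  have q2: "coeff q i = 0" if "i \<ge> 2" for i
  proof -
    have "v * coeff q i = 0" using cQ[of i] that
      by (cases i; cases "i - 1") (auto simp: Q_def)
    then show ?thesis using v0 by simp
  qed
  have eq1: "v * coeff q 1 = smult c0 (pderiv v)" using cQ[of 1]
    by (simp add: Q_def w_def c0)
  have q1: "coeff q 1 = 0"
  proof (rule ccontr)
    assume q1n: "coeff q 1 \<noteq> 0"
    then have "v * coeff q 1 \<noteq> 0" using v0 by simp
    then have pdv: "pderiv v \<noteq> 0" using eq1 by auto
    then have "degree v > 0" using pderiv_eq_0_iff by auto
    have "degree (v * coeff q 1) = degree v + degree (coeff q 1)"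
      using v0 q1n by (rule degree_mult_eq)
    moreover have "degree (smult c0 (pderiv v)) = degree v - 1"
      using c00 by (simp add: degree_pderiv)
    ultimately show False using eq1 \<open>degree v > 0\<close> by simp
  qed
  define \<beta> where "\<beta> = coeff q 0"
  have qb: "q = [:\<beta>:]"
  proof (rule poly_eqI)
    fix i show "coeff q i = coeff [:\<beta>:] i"
      using q1 q2 by (cases i; cases "i - 1") (auto simp: \<beta>_def)
  qed
  obtain B where B: "pderiv B = \<beta>" using antideriv by blast
  define f :: "'a bipoly" where "f = [:-B, [:c0:]:]"
  have "f = kconst c0 * vary - [:B:]" by (simp add: f_def kconst_def vary_def)
  then have "D f = kconst c0 * q - [:pderiv B:] * p"
    by (simp add: der_basic[OF der] m der_chain[OF der] q_def p_def)
  also have "\<dots> = 0" using B qb pc0 by (simp add: kconst_def mult.commute)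
  finally have "f dvd D f" by simp
  moreover have "f \<noteq> 0" using c00 by (simp add: f_def)
  moreover have "\<not> is_unit f"
  proof
    assume "is_unit f"
    then obtain e where "f = [:e:]" using is_unit_poly_iff by blast
    then show False using c00 by (simp add: f_def)
  qed
  ultimately show False using stable_principal[OF simple] by blast
qed

theorem lemma2p4:
  fixes D \<rho> :: "'a::field_char_0 bipoly \<Rightarrow> 'a bipoly"
  assumes "alg_closed TYPE('a)"
    and "simple_derivation D"
    and "\<rho> \<in> Aut_der D"
    and "\<rho> ` principal_ideal varx = principal_ideal varx"
  shows "\<rho> = id"
proof (rule ccontr)
  assume ne: "\<rho> \<noteq> id"
  have A: "is_K_automorphism \<rho>" using assms(3) by (simp add: Aut_der_def)
  obtain l where l: "\<rho> varx = kconst l * varx" using rho_x[OF A assms(4)] by blast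
  show False
  proof (cases "\<exists>y0. ev y0 (\<rho> vary) = y0")
    case True
    then obtain y0 where "ev y0 (\<rho> vary) = y0" by blast
    then show False using caseA[OF assms(2) assms(3) ne _ l] by blast
  next
    case False
    then show False using caseB[OF assms(1) assms(2) assms(3) _ l] by blast
  qed
qed

end
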